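(* Let $\phi:B_E\to B_E$ be analytic. For each $z\in B_E$ with $\phi(z)\neq 0$ there is $\eta(z) \in E$ with $\|\eta(z)\|=1$ and $\langle \phi(z),\eta(z)\rangle=0$ such that, for $\xi =\phi(z) + \sqrt{1 - \|\phi(z)\|^2}\,\eta(z)$, $$|\langle\mathcal R\phi(z),\xi\rangle|\ge\sqrt{1 - \|\phi(z)\|^2}\, \|\mathcal R\phi(z)\| -\Big(1 + \frac{\sqrt{1 - \|\phi(z)\|^2}}{\|\phi(z)\|}\Big) |\langle \mathcal R\phi(z),\phi(z)\rangle|.$$
   Context: $E$ is a complex Hilbert space of arbitrary dimension with inner product $\langle\cdot,\cdot\rangle$ and open unit ball $B_E$; $\mathcal R\phi(z)=\phi'(z)(z)$ is the radial derivative of $\phi$.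
   Formalization: E has complex dimension at least 2, that is, it contains two complex-linearly independent vectors. Apart from conventions, each condition added here is assumed in the paper as well or is needed for the statement above to hold. *)

theory Defs
  imports "HOL-Analysis.Analysis"
begin

class complex_inner = real_normed_vector +
  fixes cscale :: "complex \<Rightarrow> 'a \<Rightarrow> 'a"
    and cinner :: "'a \<Rightarrow> 'a \<Rightarrow> complex"
  assumes cscale_add_right: "cscale a (x + y) = cscale a x + cscale a y"
    and cscale_add_left: "cscale (a + b) x = cscale a x + cscale b x"
    and cscale_cscale: "cscale a (cscale b x) = cscale (a * b) x"
    and cscale_of_real: "cscale (complex_of_real r) x = r *\<^sub>R x"
    and cinner_add_left: "cinner (x + y) z = cinner x z + cinner y z"
    and cinner_cscale_left: "cinner (cscale a x) y = a * cinner x y"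
    and cinner_commute: "cinner y x = cnj (cinner x y)"
    and cinner_self_norm: "cinner x x = complex_of_real ((norm x)\<^sup>2)"

class complex_hilbert = complex_inner + complete_space

definition cholomorphic_on :: "('a::complex_inner \<Rightarrow> 'b::complex_inner) \<Rightarrow> 'a set \<Rightarrow> bool" where
  "cholomorphic_on f U \<longleftrightarrow>
     (\<forall>z\<in>U. \<exists>L. (f has_derivative L) (at z) \<and> (\<forall>a x. L (cscale a x) = cscale a (L x)))"

definition radial_deriv :: "('a::complex_inner \<Rightarrow> 'b::complex_inner) \<Rightarrow> 'a \<Rightarrow> 'b" where
  "radial_deriv f z = frechet_derivative f (at z) z"

definition cdim_ge_2 :: "'a::complex_inner itself \<Rightarrow> bool" where
  "cdim_ge_2 _ \<longleftrightarrow> (\<exists>u v::'a. \<forall>a b. cscale a u + cscale b v = 0 \<longrightarrow> a = 0 \<and> b = 0)"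

end

theory Submission
  imports Defs
begin

lemma cscale_zero_left: "cscale 0 (x::'a::complex_inner) = 0"
  using cscale_of_real[of 0 x] by simp

lemma cscale_one: "cscale 1 (x::'a::complex_inner) = x"
  using cscale_of_real[of 1 x] by simp

lemma cscale_minus_left: "cscale (- a) (x::'a::complex_inner) = - cscale a x"
  using cscale_add_left[of a "-a" x] cscale_zero_left[of x]
  by (simp add: add_eq_0_iff2)

lemma cscale_diff_left: "cscale (a - b) (x::'a::complex_inner) = cscale a x - cscale b x"
  using cscale_add_left[of a "-b" x] cscale_minus_left[of b x] by simp

lemma cinner_zero_left: "cinner (0::'a::complex_inner) y = 0"
  using cinner_add_left[of "0::'a" 0 y] by simp

lemma cinner_minus_left: "cinner (- x::'a::complex_inner) y = - cinner x y"
  using cinner_add_left[of x "-x" y] cinner_zero_left[of y]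
  by (simp add: add_eq_0_iff2)

lemma cinner_diff_left: "cinner (x - z::'a::complex_inner) y = cinner x y - cinner z y"
  using cinner_add_left[of x "-z" y] cinner_minus_left[of z y] by simp

lemma cinner_cscale_right: "cinner (x::'a::complex_inner) (cscale a y) = cnj a * cinner x y"
  by (metis cinner_commute cinner_cscale_left complex_cnj_cnj complex_cnj_mult)

lemma cinner_scaleR_right: "cinner (x::'a::complex_inner) (r *\<^sub>R y) = complex_of_real r * cinner x y"
  using cinner_cscale_right[of x "complex_of_real r" y] cscale_of_real[of r y] by simp

lemma cinner_add_right: "cinner (x::'a::complex_inner) (y + z) = cinner x y + cinner x z"
  by (metis cinner_add_left cinner_commute complex_cnj_add)

lemma norm_cscale: "norm (cscale a (x::'a::complex_inner)) = cmod a * norm x"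
proof -
  have "complex_of_real ((norm (cscale a x))\<^sup>2) = a * cnj a * complex_of_real ((norm x)\<^sup>2)"
    by (metis cinner_self_norm cinner_cscale_left cinner_cscale_right mult.assoc)
  also have "\<dots> = complex_of_real ((cmod a * norm x)\<^sup>2)"
    by (simp add: complex_mult_cnj power_mult_distrib cmod_power2 del: of_real_power)
  finally have "(norm (cscale a x))\<^sup>2 = (cmod a * norm x)\<^sup>2" using of_real_eq_iff by blast
  then show ?thesis by (simp add: power2_eq_iff_nonneg)
qed

definition proj :: "'a::complex_inner \<Rightarrow> 'a \<Rightarrow> 'a" where
  "proj p x = x - cscale (cinner x p / complex_of_real ((norm p)\<^sup>2)) p"

lemma proj_orth:
  assumes "p \<noteq> 0" shows "cinner (proj p x) p = 0"
  using assms by (simp add: proj_def cinner_diff_left cinner_cscale_left cinner_self_norm)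

lemma main_ineq:
  fixes p w \<eta> :: "'a::complex_inner" and s :: real
  assumes p: "p \<noteq> 0" and s: "s \<ge> 0" and e1: "norm \<eta> = 1" and e2: "cinner p \<eta> = 0"
    and e3: "cinner (proj p w) \<eta> = complex_of_real (norm (proj p w))"
  shows "cmod (cinner w (p + s *\<^sub>R \<eta>)) \<ge> s * norm w - (1 + s / norm p) * cmod (cinner w p)"
proof -
  define c where "c = cinner w p / complex_of_real ((norm p)\<^sup>2)"
  define n where "n = norm (proj p w)"
  have wdec: "w = proj p w + cscale c p" by (simp add: proj_def c_def)
  have "cinner p \<eta> = 0" by fact
  then have pe: "cinner (cscale c p) \<eta> = 0" by (simp add: cinner_cscale_left)
  have we: "cinner w \<eta> = complex_of_real n"
    using wdec e3 pe cinner_add_left[of "proj p w" "cscale c p" \<eta>] n_def by simp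
  have "cinner w (p + s *\<^sub>R \<eta>) = cinner w p + complex_of_real (s * n)"
    by (simp add: cinner_add_right cinner_scaleR_right we)
  then have "cmod (cinner w (p + s *\<^sub>R \<eta>)) \<ge> s * n - cmod (cinner w p)"
  proof -
    have "cmod (complex_of_real (s*n)) - cmod (cinner w p) \<le> cmod (cinner w p + complex_of_real (s * n))"
      by (metis add.commute norm_diff_ineq norm_minus_cancel diff_minus_eq_add)
    moreover have "cmod (complex_of_real (s*n)) = s * n" using s n_def by (simp only: norm_of_real abs_of_nonneg mult_nonneg_nonneg norm_ge_zero)
    ultimately show ?thesis using \<open>cinner w (p + s *\<^sub>R \<eta>) = _\<close> by simp
  qed
  moreover have "norm w \<le> n + cmod c * norm p"
    using norm_triangle_ineq[of "proj p w" "cscale c p"] wdec n_def norm_cscale by metis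
  moreover have "cmod c * norm p = cmod (cinner w p) / norm p"
    using p by (simp add: c_def norm_divide norm_mult power2_eq_square del: of_real_mult)
  ultimately have "norm w \<le> n + cmod (cinner w p) / norm p" and
     "cmod (cinner w (p + s *\<^sub>R \<eta>)) \<ge> s * n - cmod (cinner w p)" by auto
  then have "s * norm w \<le> s * n + s * (cmod (cinner w p) / norm p)"
    using s by (metis distrib_left mult_left_mono)
  with \<open>cmod (cinner w (p + s *\<^sub>R \<eta>)) \<ge> s * n - cmod (cinner w p)\<close> show ?thesis
    by (simp add: algebra_simps)
qed

lemma exists_orth_unit:
  fixes p :: "'a::complex_inner"
  assumes d: "cdim_ge_2 TYPE('a)" and p: "p \<noteq> 0"
  shows "\<exists>q. proj p q \<noteq> 0"
proof (rule ccontr)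
  assume "\<not> ?thesis"
  then have z: "\<And>q. proj p q = 0" by blast
  obtain u v :: 'a where uv: "\<And>a b. cscale a u + cscale b v = 0 \<Longrightarrow> a = 0 \<and> b = 0"
    using d unfolding cdim_ge_2_def by blast
  define a where "a = cinner u p / complex_of_real ((norm p)\<^sup>2)"
  define b where "b = cinner v p / complex_of_real ((norm p)\<^sup>2)"
  have u: "u = cscale a p" using z[of u] by (simp add: proj_def a_def)
  have v: "v = cscale b p" using z[of v] by (simp add: proj_def b_def)
  have "cscale b u + cscale (- a) v = 0"
    by (simp add: u v cscale_cscale cscale_minus_left mult.commute)
  then have "b = 0 \<and> a = 0" using uv by fastforce
  then have "cscale 1 u + cscale 0 v = 0" by (simp add: u v cscale_zero_left cscale_one)
  then show False using uv by fastforce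
qed

lemma exists_eta:
  fixes p w :: "'a::complex_inner"
  assumes d: "cdim_ge_2 TYPE('a)" and p: "p \<noteq> 0"
  shows "\<exists>\<eta>. norm \<eta> = 1 \<and> cinner p \<eta> = 0 \<and>
     cinner (proj p w) \<eta> = complex_of_real (norm (proj p w))"
proof -
  have key: "\<And>q. proj p q \<noteq> 0 \<Longrightarrow> (let \<eta> = cscale (complex_of_real (1 / norm (proj p q))) (proj p q) in
      norm \<eta> = 1 \<and> cinner p \<eta> = 0 \<and>
      cinner (proj p q) \<eta> = complex_of_real (norm (proj p q)))"
  proof -
    fix q assume q: "proj p q \<noteq> 0"
    define m where "m = norm (proj p q)"
    have m: "m > 0" using q m_def by simp
    have "cinner p (proj p q) = 0"
      using proj_orth[OF p, of q] cinner_commute[of p "proj p q"] by simp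
    then show "?thesis q"
      using m unfolding Let_def m_def[symmetric]
      by (simp add: norm_cscale cinner_cscale_right cinner_self_norm m_def power2_eq_square norm_divide)
  qed
  show ?thesis
  proof (cases "proj p w = 0")
    case True
    obtain q where "proj p q \<noteq> 0" using exists_orth_unit[OF d p] by blast
    from key[OF this] show ?thesis unfolding Let_def True
      by (auto simp: cinner_zero_left)
  next
    case False
    from key[OF False] show ?thesis unfolding Let_def by blast
  qed
qed

theorem lemma4p3:
  fixes \<phi> :: "'a::complex_hilbert \<Rightarrow> 'a" and z :: 'a
  assumes "cdim_ge_2 TYPE('a)"
    and "cholomorphic_on \<phi> (ball 0 1)"
    and "\<forall>w\<in>ball 0 1. \<phi> w \<in> ball 0 1"
    and "z \<in> ball 0 1"
    and "\<phi> z \<noteq> 0"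
  shows "\<exists>\<eta>. norm \<eta> = 1 \<and> cinner (\<phi> z) \<eta> = 0 \<and>
           (let s = sqrt (1 - (norm (\<phi> z))\<^sup>2);
                \<xi> = \<phi> z + s *\<^sub>R \<eta>
            in cmod (cinner (radial_deriv \<phi> z) \<xi>)
               \<ge> s * norm (radial_deriv \<phi> z)
                 - (1 + s / norm (\<phi> z)) * cmod (cinner (radial_deriv \<phi> z) (\<phi> z)))"
proof -
  obtain \<eta> where e: "norm \<eta> = 1" "cinner (\<phi> z) \<eta> = 0"
    "cinner (proj (\<phi> z) (radial_deriv \<phi> z)) \<eta> = complex_of_real (norm (proj (\<phi> z) (radial_deriv \<phi> z)))"
    using exists_eta[OF assms(1) assms(5)] by blast
  have s: "sqrt (1 - (norm (\<phi> z))\<^sup>2) \<ge> 0" using assms(3,4)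
    by (simp add: abs_square_le_1 less_imp_le)
  show ?thesis unfolding Let_def
    using e main_ineq[OF assms(5) s e] by blast
qed

end
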